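(* Let $N=2$ with $r_{11}=1$ and let $g\in(-2,2)$, $h=\sqrt{1-g^2/4}$, $G=g/h$. For $\varepsilon\in\{1,-1\}$ and $f\in[0,\pi]$ put $$l_\varepsilon(f)=\Big(\varepsilon\,\tfrac1h\sin f\;e^{\frac G2(f-\frac\pi2)},\;\big(\cos f-\tfrac G2\sin f\big)e^{\frac G2(f-\frac\pi2)}\Big).$$ Then for every $f\in[0,\pi]$ the point $l_\varepsilon(f)$ lies on the Finsleroid Indicatrix, i.e. $K(g;l_\varepsilon(f))=1$, and, writing $l_\varepsilon=(l^1,l^2)$, $$\sqrt{\det\big(g_{pq}(g;l_\varepsilon(f))\big)}\;\Big|\,l^2\frac{dl^1}{df}-l^1\frac{dl^2}{df}\Big|=\frac1h .$$ In other words, along the indicatrix the Landsberg angle $\theta$, defined by $d\theta=\sqrt{\det(g_{pq})}\,|R^2dR^1-R^1dR^2|/K^2$, satisfies $d\theta=\frac1h\,df$, so that $f$ equals $h$ times the Landsberg angle.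
   Context: Here $V_2=\mathbb{R}^2$ with points $R=(R^1,R^2)$, $Z=R^2$, $q(R)=|R^1|$. Define $B(g;R)=Z^2+gqZ+q^2$, $A(g;R)=Z+\frac12 gq$, $\Phi(g;R)=\arctan\big(A/(hq)\big)$ if $q>0$, $\Phi=\pi/2$ if $q=0,Z>0$, $\Phi=-\pi/2$ if $q=0,Z<0$; $J(g;R)=e^{\frac12 G\Phi}$ and the Finsleroid metric function $K(g;R)=\sqrt{B(g;R)}\,J(g;R)$ ($K(g;0)=0$). The Finsler metric tensor is $g_{pq}(g;R)=\frac12\,\partial^2K^2(g;R)/\partial R^p\partial R^q$. The Finsleroid Indicatrix is $\{R:K(g;R)=1\}$. *)

theory Defs
  imports "HOL-Analysis.Analysis"
begin

text \<open>Finsleroid in dimension N = 2: points R = (R1, R2), Z = R2, q = abs R1.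
  All quantities depend on the parameter g (with h = sqrt(1 - g^2/4), G = g/h).\<close>

definition fh :: "real \<Rightarrow> real" where
  "fh g = sqrt (1 - g\<^sup>2 / 4)"

definition fG :: "real \<Rightarrow> real" where
  "fG g = g / fh g"

definition fq :: "real \<Rightarrow> real \<Rightarrow> real" where
  "fq R1 R2 = \<bar>R1\<bar>"

definition fB :: "real \<Rightarrow> real \<Rightarrow> real \<Rightarrow> real" where
  "fB g R1 R2 = R2\<^sup>2 + g * fq R1 R2 * R2 + (fq R1 R2)\<^sup>2"

definition fA :: "real \<Rightarrow> real \<Rightarrow> real \<Rightarrow> real" where
  "fA g R1 R2 = R2 + g * fq R1 R2 / 2"

definition fPhi :: "real \<Rightarrow> real \<Rightarrow> real \<Rightarrow> real" where
  "fPhi g R1 R2 =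
     (if fq R1 R2 > 0 then arctan (fA g R1 R2 / (fh g * fq R1 R2))
      else if R2 > 0 then pi / 2
      else if R2 < 0 then - pi / 2
      else 0)"

definition fJ :: "real \<Rightarrow> real \<Rightarrow> real \<Rightarrow> real" where
  "fJ g R1 R2 = exp (fG g * fPhi g R1 R2 / 2)"

definition finsleroid_K :: "real \<Rightarrow> real \<Rightarrow> real \<Rightarrow> real" where
  "finsleroid_K g R1 R2 =
     (if R1 = 0 \<and> R2 = 0 then 0 else sqrt (fB g R1 R2) * fJ g R1 R2)"

definition Ksq :: "real \<Rightarrow> real \<Rightarrow> real \<Rightarrow> real" where
  "Ksq g R1 R2 = (finsleroid_K g R1 R2)\<^sup>2"

definition partial1 :: "(real \<Rightarrow> real \<Rightarrow> real) \<Rightarrow> real \<Rightarrow> real \<Rightarrow> real" where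
  "partial1 F x y = deriv (\<lambda>t. F t y) x"

definition partial2 :: "(real \<Rightarrow> real \<Rightarrow> real) \<Rightarrow> real \<Rightarrow> real \<Rightarrow> real" where
  "partial2 F x y = deriv (\<lambda>t. F x t) y"

definition finsler_g :: "real \<Rightarrow> nat \<Rightarrow> nat \<Rightarrow> real \<Rightarrow> real \<Rightarrow> real" where
  "finsler_g g p q R1 R2 =
     (let D = (\<lambda>i F. if i = 1 then partial1 F else partial2 F)
      in (1/2) * D p (D q (Ksq g)) R1 R2)"

definition finsler_det :: "real \<Rightarrow> real \<Rightarrow> real \<Rightarrow> real" where
  "finsler_det g R1 R2 =
     finsler_g g 1 1 R1 R2 * finsler_g g 2 2 R1 R2 - finsler_g g 1 2 R1 R2 * finsler_g g 2 1 R1 R2"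

definition l1 :: "real \<Rightarrow> real \<Rightarrow> real \<Rightarrow> real" where
  "l1 g \<epsilon> f = \<epsilon> * (1 / fh g) * sin f * exp (fG g / 2 * (f - pi / 2))"

definition l2 :: "real \<Rightarrow> real \<Rightarrow> real \<Rightarrow> real" where
  "l2 g \<epsilon> f = (cos f - fG g / 2 * sin f) * exp (fG g / 2 * (f - pi / 2))"

end

theory Submission
  imports Defs
begin

definition EE :: "real \<Rightarrow> real \<Rightarrow> real \<Rightarrow> real" where
  "EE g u y = exp (fG g * fPhi g u y)"

lemma ev_gt: "(a::real) < u \<Longrightarrow> eventually (\<lambda>t. a < t) (nhds u)"
  unfolding eventually_nhds by (intro exI[of _ "{a<..}"]) auto

lemma ev_lt: "(u::real) < a \<Longrightarrow> eventually (\<lambda>t. t < a) (nhds u)"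
  unfolding eventually_nhds by (intro exI[of _ "{..<a}"]) auto

lemma DERIV_abs_nz:
  assumes "(u::real) \<noteq> 0" shows "((\<lambda>t. \<bar>t\<bar>) has_real_derivative sgn u) (at u)"
proof (cases "u > 0")
  case True
  have ev: "eventually (\<lambda>t. t = \<bar>t\<bar>) (nhds u)" using ev_gt[OF True] by eventually_elim simp
  have "DERIV (\<lambda>t. t) u :> 1 \<longleftrightarrow> DERIV (\<lambda>t. \<bar>t\<bar>) u :> 1" by (rule DERIV_cong_ev[OF refl ev refl])
  then show ?thesis using DERIV_ident True by (simp add: sgn_if)
next
  case False
  then have u: "u < 0" using assms by simp
  have ev: "eventually (\<lambda>t. -t = \<bar>t\<bar>) (nhds u)" using ev_lt[OF u] by eventually_elim simp
  have "((\<lambda>t. -t) has_real_derivative -1) (at u)" by (auto intro!: derivative_eq_intros)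
  moreover have "DERIV (\<lambda>t. -t) u :> -1 \<longleftrightarrow> DERIV (\<lambda>t. \<bar>t\<bar>) u :> -1" by (rule DERIV_cong_ev[OF refl ev refl])
  ultimately show ?thesis using u by (simp add: sgn_if)
qed

lemma abs_comp_deriv0:
  fixes F :: "real \<Rightarrow> real"
  assumes "(F has_real_derivative 0) (at 0)"
  shows "((\<lambda>s. F \<bar>s\<bar>) has_real_derivative 0) (at 0)"
proof -
  obtain Q where Q: "\<And>z. F z - F 0 = Q z * (z - 0)" "isCont Q 0" "Q 0 = 0"
    using assms unfolding CARAT_DERIV by blast
  have c: "isCont (\<lambda>z. Q \<bar>z\<bar>) 0"
    using Q(2) by (intro continuous_at_compose[unfolded o_def, of _ "\<lambda>z. \<bar>z\<bar>" Q]) (auto intro: continuous_intros)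
  then have "((\<lambda>z. \<bar>Q \<bar>z\<bar>\<bar>) \<longlongrightarrow> 0) (at 0)"
    using Q(3) unfolding isCont_def by (metis abs_zero tendsto_rabs)
  then have "((\<lambda>z. sgn z * Q \<bar>z\<bar>) \<longlongrightarrow> 0) (at 0)"
    by (rule Lim_null_comparison[rotated]) (auto simp: sgn_if abs_mult)
  then have "isCont (\<lambda>z. sgn z * Q \<bar>z\<bar>) 0" unfolding isCont_def by simp
  moreover have "\<And>z. F \<bar>z\<bar> - F \<bar>0\<bar> = (sgn z * Q \<bar>z\<bar>) * (z - 0)"
    using Q(1) by (simp add: sgn_if)
  ultimately show ?thesis unfolding CARAT_DERIV by (intro exI[of _ "\<lambda>z. sgn z * Q \<bar>z\<bar>"]) simp
qed

context
  fixes g :: real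
  assumes g1: "-2 < g" and g2: "g < 2"
begin

lemma hsq: "(fh g)\<^sup>2 = 1 - g\<^sup>2/4"
proof -
  have "g\<^sup>2 < 4" using g1 g2 by (smt (verit) abs_square_less_1 power2_abs real_sqrt_abs real_sqrt_four real_sqrt_less_iff)
  then show ?thesis unfolding fh_def by simp
qed

lemma hpos: "fh g > 0"
proof -
  have "g\<^sup>2 < 4" using g1 g2 by (smt (verit) abs_square_less_1 power2_abs real_sqrt_abs real_sqrt_four real_sqrt_less_iff)
  then show ?thesis unfolding fh_def by simp
qed

lemma Gh: "fG g * fh g = g"
  using hpos by (simp add: fG_def)

lemma B_alt: "fB g u y = (y + g * \<bar>u\<bar> / 2)\<^sup>2 + (fh g)\<^sup>2 * u\<^sup>2"
  unfolding fB_def fq_def hsq by (simp add: power2_eq_square algebra_simps)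

lemma B_nonneg: "fB g u y \<ge> 0"
  unfolding B_alt by simp

lemma B_pos: "u \<noteq> 0 \<Longrightarrow> fB g u y > 0"
  unfolding B_alt using hpos by (simp add: add_nonneg_pos)

lemma Ksq_eq: "Ksq g u y = fB g u y * EE g u y"
proof (cases "u = 0 \<and> y = 0")
  case True thus ?thesis by (simp add: Ksq_def finsleroid_K_def fB_def fq_def)
next
  case False
  have "(exp (fG g * fPhi g u y / 2))\<^sup>2 = exp (fG g * fPhi g u y)"
    by (simp add: power2_eq_square exp_add[symmetric])
  then show ?thesis using False B_nonneg[of u y]
    by (simp add: Ksq_def finsleroid_K_def fJ_def EE_def power_mult_distrib fB_def fq_def)
qed


lemma Phi_pos: "t > 0 \<Longrightarrow> fPhi g t y = arctan ((y + g*t/2) / (fh g * t))"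
  by (simp add: fPhi_def fq_def fA_def)

lemma Phi_sym: "fPhi g (-t) y = fPhi g t y"
  by (simp add: fPhi_def fq_def fA_def)

lemma EE_sym: "EE g (-t) y = EE g t y"
  by (simp add: EE_def Phi_sym)

lemma B_sym: "fB g (-t) y = fB g t y"
  by (simp add: fB_def fq_def)

lemma E_du_pos:
  assumes u: "u > 0"
  shows "((\<lambda>t. EE g t y) has_real_derivative (- g * y * EE g u y / fB g u y)) (at u)"
proof -
  define h where "h = fh g"
  have h: "h > 0" using hpos h_def by simp
  have ev: "eventually (\<lambda>t. exp (g / h * arctan ((y + g*t/2) / (h * t))) = EE g t y) (nhds u)"
  proof -
    have "eventually (\<lambda>t. t > 0) (nhds u)" using u by (rule ev_gt)
    then show ?thesis by eventually_elim (simp add: EE_def Phi_pos h_def fG_def)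
  qed
  have Bu: "fB g u y = (y + g*u/2)\<^sup>2 + h\<^sup>2 * u\<^sup>2" using u by (simp add: B_alt h_def)
  have Bp: "(y + g*u/2)\<^sup>2 + h\<^sup>2 * u\<^sup>2 > 0" using u h by (simp add: add_nonneg_pos)
  define w where "w = (\<lambda>t. (y + g*t/2)/(h*t))"
  have w: "(w has_real_derivative (-y/(h*u\<^sup>2))) (at u)"
    unfolding w_def using u h by (auto intro!: derivative_eq_intros simp: field_simps power2_eq_square)
  have a: "((\<lambda>t. exp (g / h * arctan (w t))) has_real_derivative
      exp (g / h * arctan (w u)) * (g / h * (inverse (1 + (w u)\<^sup>2) * (-y/(h*u\<^sup>2))))) (at u)"
    by (intro DERIV_chain2[OF DERIV_exp] DERIV_cmult DERIV_chain2[OF DERIV_arctan] w)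
  have inv: "inverse (1 + (w u)\<^sup>2) = h\<^sup>2 * u\<^sup>2 / ((y + g*u/2)\<^sup>2 + h\<^sup>2 * u\<^sup>2)"
    unfolding w_def using u h Bp by (simp add: field_simps power2_eq_square)
  have "((\<lambda>t. exp (g / h * arctan ((y + g*t/2) / (h * t)))) has_real_derivative
      (- g * y * exp (g / h * arctan ((y + g*u/2) / (h * u))) / ((y + g*u/2)\<^sup>2 + h\<^sup>2 * u\<^sup>2))) (at u)"
    using a unfolding inv using u h Bp by (simp add: w_def field_simps power2_eq_square)
  then have "((\<lambda>t. EE g t y) has_real_derivative
      (- g * y * exp (g / h * arctan ((y + g*u/2) / (h * u))) / ((y + g*u/2)\<^sup>2 + h\<^sup>2 * u\<^sup>2))) (at u)"
    using DERIV_cong_ev[OF refl ev refl] by simp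
  then show ?thesis
    using u by (simp add: Bu EE_def Phi_pos h_def fG_def)
qed


lemma E_du:
  assumes u: "u \<noteq> 0"
  shows "((\<lambda>t. EE g t y) has_real_derivative (- g * y * sgn u * EE g u y / fB g u y)) (at u)"
proof (cases "u > 0")
  case True thus ?thesis using E_du_pos by simp
next
  case False
  then have u': "-u > 0" using u by simp
  have "((\<lambda>t. EE g (-t) y) has_real_derivative (- g * y * EE g (-u) y / fB g (-u) y) * (-1)) (at u)"
    by (rule DERIV_chain2[where f="\<lambda>t. EE g t y" and g="\<lambda>t. -t" and x=u, OF E_du_pos[OF u']]) (auto intro!: derivative_eq_intros)
  then show ?thesis using False u by (simp add: EE_sym B_sym)
qed

lemma E_dy:
  assumes u: "u \<noteq> 0"
  shows "((\<lambda>t. EE g u t) has_real_derivative (g * \<bar>u\<bar> * EE g u y / fB g u y)) (at y)"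
proof -
  define h where "h = fh g"
  have h: "h > 0" using hpos h_def by simp
  have eq: "(\<lambda>t. EE g u t) = (\<lambda>t. exp (g / h * arctan ((t + g*\<bar>u\<bar>/2) / (h * \<bar>u\<bar>))))"
    using u by (auto simp: EE_def fPhi_def fq_def fA_def h_def fG_def)
  have Bu: "fB g u y = (y + g*\<bar>u\<bar>/2)\<^sup>2 + h\<^sup>2 * \<bar>u\<bar>\<^sup>2" using u by (simp add: B_alt h_def)
  have Bp: "(y + g*\<bar>u\<bar>/2)\<^sup>2 + h\<^sup>2 * \<bar>u\<bar>\<^sup>2 > 0" using u h by (simp add: add_nonneg_pos)
  define w where "w = (\<lambda>t. (t + g*\<bar>u\<bar>/2) / (h * \<bar>u\<bar>))"
  have w: "(w has_real_derivative (1/(h*\<bar>u\<bar>))) (at y)"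
    unfolding w_def using u h by (auto intro!: derivative_eq_intros simp: field_simps)
  have a: "((\<lambda>t. exp (g / h * arctan (w t))) has_real_derivative
      exp (g / h * arctan (w y)) * (g / h * (inverse (1 + (w y)\<^sup>2) * (1/(h*\<bar>u\<bar>))))) (at y)"
    by (intro DERIV_chain2[OF DERIV_exp] DERIV_cmult DERIV_chain2[OF DERIV_arctan] w)
  have inv: "inverse (1 + (w y)\<^sup>2) = h\<^sup>2 * \<bar>u\<bar>\<^sup>2 / ((y + g*\<bar>u\<bar>/2)\<^sup>2 + h\<^sup>2 * \<bar>u\<bar>\<^sup>2)"
    unfolding w_def using u h Bp by (cases "u > 0") (simp_all add: field_simps power2_eq_square)
  have "exp (g / h * arctan (w y)) * (g / h * (inverse (1 + (w y)\<^sup>2) * (1/(h*\<bar>u\<bar>))))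
     = g * \<bar>u\<bar> * EE g u y / fB g u y"
    unfolding inv Bu using u h Bp by (cases "u > 0") (simp_all add: eq w_def field_simps power2_eq_square)
  then show ?thesis using a unfolding eq w_def by simp
qed

lemma Ksq_sym: "Ksq g (-t) y = Ksq g t y"
  by (simp add: Ksq_eq EE_sym B_sym)


lemma D1_pos:
  assumes t: "t > 0"
  shows "((\<lambda>s. Ksq g s y) has_real_derivative 2 * t * EE g t y) (at t)"
proof -
  have ev: "eventually (\<lambda>s. (y\<^sup>2 + g * s * y + s\<^sup>2) * EE g s y = Ksq g s y) (nhds t)"
    using ev_gt[OF t] by eventually_elim (simp add: Ksq_eq fB_def fq_def)
  have Bt: "fB g t y = y\<^sup>2 + g*t*y + t\<^sup>2" using t by (simp add: fB_def fq_def)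
  have Bp: "fB g t y > 0" using t B_pos by simp
  have "((\<lambda>s. (y\<^sup>2 + g * s * y + s\<^sup>2) * EE g s y) has_real_derivative
      (g*y + 2*t) * EE g t y + (- g * y * EE g t y / fB g t y) * (y\<^sup>2 + g*t*y + t\<^sup>2)) (at t)"
    by (rule DERIV_mult[OF _ E_du_pos[OF t]]) (auto intro!: derivative_eq_intros)
  moreover have "(g*y + 2*t) * EE g t y + (- g * y * EE g t y / fB g t y) * (y\<^sup>2 + g*t*y + t\<^sup>2) = 2 * t * EE g t y"
    using Bp unfolding Bt[symmetric] by (simp add: field_simps)
  ultimately have "((\<lambda>s. (y\<^sup>2 + g * s * y + s\<^sup>2) * EE g s y) has_real_derivative 2 * t * EE g t y) (at t)" by simp
  moreover have "DERIV (\<lambda>s. (y\<^sup>2 + g * s * y + s\<^sup>2) * EE g s y) t :> 2 * t * EE g t y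
      \<longleftrightarrow> DERIV (\<lambda>s. Ksq g s y) t :> 2 * t * EE g t y" by (rule DERIV_cong_ev[OF refl ev refl])
  ultimately show ?thesis by simp
qed

lemma D1_nz:
  assumes t: "t \<noteq> 0"
  shows "((\<lambda>s. Ksq g s y) has_real_derivative 2 * t * EE g t y) (at t)"
proof (cases "t > 0")
  case True thus ?thesis using D1_pos by simp
next
  case False
  then have t': "-t > 0" using t by simp
  have "((\<lambda>s. Ksq g (-s) y) has_real_derivative (2 * (-t) * EE g (-t) y) * (-1)) (at t)"
    by (rule DERIV_chain2[where f="\<lambda>s. Ksq g s y" and g="\<lambda>t. -t" and x=t, OF D1_pos[OF t']]) (auto intro!: derivative_eq_intros)
  then show ?thesis by (simp add: EE_sym Ksq_sym)
qed

definition HH :: "real \<Rightarrow> real \<Rightarrow> real" where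
  "HH y r = exp (fG g * (sgn y * pi/2 - arctan (fh g * r / (y + g*r/2))))"

lemma Erep:
  assumes y: "y \<noteq> 0"
  shows "eventually (\<lambda>s. EE g s y = HH y \<bar>s\<bar>) (nhds 0)"
proof -
  have ev: "eventually (\<lambda>s. \<bar>s\<bar> < \<bar>y\<bar>) (nhds 0)"
    unfolding eventually_nhds using y by (intro exI[of _ "{-\<bar>y\<bar><..<\<bar>y\<bar>}"]) auto
  show ?thesis using ev
  proof eventually_elim
    case (elim s)
    show ?case
    proof (cases "s = 0")
      case True thus ?thesis using y by (auto simp: EE_def HH_def fPhi_def fq_def sgn_if)
    next
      case False
      define A where "A = y + g*\<bar>s\<bar>/2"
      have gs: "\<bar>g*\<bar>s\<bar>/2\<bar> < \<bar>y\<bar>"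
      proof -
        have "\<bar>g*\<bar>s\<bar>/2\<bar> = \<bar>g\<bar>/2 * \<bar>s\<bar>" by (simp add: abs_mult)
        also have "\<dots> \<le> \<bar>s\<bar>" using g1 g2 by (intro mult_left_le_one_le) auto
        finally show ?thesis using elim by simp
      qed
      have sA: "sgn A = sgn y" using gs unfolding A_def by (auto simp: sgn_if)
      have A0: "A \<noteq> 0" using sA y by (metis sgn_0_0 sgn_zero_iff)
      have hp: "fh g > 0" by (rule hpos)
      have x0: "fh g * \<bar>s\<bar> / A \<noteq> 0" using A0 hp False by simp
      have "fPhi g s y = arctan (A / (fh g * \<bar>s\<bar>))"
        using False by (simp add: fPhi_def fq_def fA_def A_def)
      also have "\<dots> = arctan (1 / (fh g * \<bar>s\<bar> / A))" by simp
      also have "\<dots> = sgn (fh g * \<bar>s\<bar> / A) * pi/2 - arctan (fh g * \<bar>s\<bar> / A)"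
        by (rule Transcendental.arctan_inverse[OF x0])
      also have "sgn (fh g * \<bar>s\<bar> / A) = sgn y"
        using hp False sA by (simp add: sgn_mult sgn_divide)
      finally show ?thesis by (simp add: EE_def HH_def A_def)
    qed
  qed
qed


lemma HH_deriv:
  assumes y: "y \<noteq> 0"
  shows "(HH y has_real_derivative HH y 0 * (- g / y)) (at 0)"
proof -
  define h where "h = fh g"
  have h: "h > 0" using hpos h_def by simp
  define w where "w = (\<lambda>r. h * r / (y + g*r/2))"
  have w: "(w has_real_derivative (h / y)) (at 0)"
    unfolding w_def using y h by (auto intro!: derivative_eq_intros simp: field_simps power2_eq_square)
  have eq: "HH y = (\<lambda>r. exp (fG g * (sgn y * pi/2 - arctan (w r))))"
    by (auto simp: HH_def w_def h_def)
  have a: "((\<lambda>r. exp (fG g * (sgn y * pi/2 - arctan (w r)))) has_real_derivative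
     exp (fG g * (sgn y * pi/2 - arctan (w 0))) * (fG g * (0 - inverse (1 + (w 0)\<^sup>2) * (h / y)))) (at 0)"
    by (intro DERIV_chain2[OF DERIV_exp] DERIV_cmult DERIV_diff DERIV_const DERIV_chain2[OF DERIV_arctan] w)
  have "fG g * h = g" using Gh h_def by simp
  then have e: "exp (fG g * (sgn y * pi/2 - arctan (w 0))) * (fG g * (0 - inverse (1 + (w 0)\<^sup>2) * (h / y)))
     = HH y 0 * (- g / y)" by (simp add: eq w_def)
  from a[unfolded e, folded eq] show ?thesis .
qed

lemma D1_0:
  assumes y: "y \<noteq> 0"
  shows "((\<lambda>s. Ksq g s y) has_real_derivative 0) (at 0)"
proof -
  define F where "F = (\<lambda>r. (y\<^sup>2 + g * r * y + r\<^sup>2) * HH y r)"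
  have "(F has_real_derivative ((g * y + 2 * 0) * HH y 0 + HH y 0 * (- g / y) * (y\<^sup>2 + g * 0 * y + 0\<^sup>2))) (at 0)"
    unfolding F_def by (rule DERIV_mult[OF _ HH_deriv[OF y]]) (auto intro!: derivative_eq_intros)
  moreover have "(g * y + 2 * 0) * HH y 0 + HH y 0 * (- g / y) * (y\<^sup>2 + g * 0 * y + 0\<^sup>2) = 0"
    using y by (simp add: field_simps power2_eq_square)
  ultimately have "(F has_real_derivative 0) (at 0)" by simp
  then have d: "((\<lambda>s. F \<bar>s\<bar>) has_real_derivative 0) (at 0)" by (rule abs_comp_deriv0)
  have ev: "eventually (\<lambda>s. F \<bar>s\<bar> = Ksq g s y) (nhds 0)"
    using Erep[OF y] by eventually_elim (simp add: F_def Ksq_eq fB_def fq_def)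
  have "DERIV (\<lambda>s. F \<bar>s\<bar>) 0 :> 0 \<longleftrightarrow> DERIV (\<lambda>s. Ksq g s y) 0 :> 0" by (rule DERIV_cong_ev[OF refl ev refl])
  then show ?thesis using d by simp
qed

lemma D1_00: "((\<lambda>s. Ksq g s 0) has_real_derivative 0) (at 0)"
proof -
  define c where "c = exp (fG g * arctan (g / (2 * fh g)))"
  have hp: "fh g > 0" by (rule hpos)
  have eq: "(\<lambda>s. Ksq g s 0) = (\<lambda>s. c * s\<^sup>2)"
  proof
    fix s :: real
    show "Ksq g s 0 = c * s\<^sup>2"
    proof (cases "s = 0")
      case True thus ?thesis by (simp add: Ksq_def finsleroid_K_def)
    next
      case False
      have "g * \<bar>s\<bar> / 2 / (fh g * \<bar>s\<bar>) = g / (2 * fh g)" using False hp by (simp add: field_simps)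
      then show ?thesis using False by (simp add: Ksq_eq EE_def fPhi_def fq_def fA_def fB_def c_def mult.commute)
    qed
  qed
  have "((\<lambda>s. c * s\<^sup>2) has_real_derivative c * (2 * 0)) (at 0)"
    by (auto intro!: derivative_eq_intros)
  then show ?thesis unfolding eq by simp
qed

lemma D1: "((\<lambda>s. Ksq g s y) has_real_derivative 2 * t * EE g t y) (at t)"
proof (cases "t = 0")
  case False thus ?thesis by (rule D1_nz)
next
  case True thus ?thesis using D1_0 D1_00 by (cases "y = 0") auto
qed


lemma D2_nz:
  assumes x: "x \<noteq> 0"
  shows "((\<lambda>s. Ksq g x s) has_real_derivative 2 * (t + g * \<bar>x\<bar>) * EE g x t) (at t)"
proof -
  have eq: "(\<lambda>s. Ksq g x s) = (\<lambda>s. (s\<^sup>2 + g * \<bar>x\<bar> * s + x\<^sup>2) * EE g x s)"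
    by (auto simp: Ksq_eq fB_def fq_def algebra_simps)
  have Bt: "fB g x t = t\<^sup>2 + g * \<bar>x\<bar> * t + x\<^sup>2" by (simp add: fB_def fq_def algebra_simps)
  have Bp: "fB g x t > 0" using x B_pos by simp
  have "((\<lambda>s. (s\<^sup>2 + g * \<bar>x\<bar> * s + x\<^sup>2) * EE g x s) has_real_derivative
      (2 * t + g * \<bar>x\<bar>) * EE g x t + (g * \<bar>x\<bar> * EE g x t / fB g x t) * (t\<^sup>2 + g * \<bar>x\<bar> * t + x\<^sup>2)) (at t)"
    by (rule DERIV_mult[OF _ E_dy[OF x]]) (auto intro!: derivative_eq_intros)
  moreover have "(2 * t + g * \<bar>x\<bar>) * EE g x t + (g * \<bar>x\<bar> * EE g x t / fB g x t) * (t\<^sup>2 + g * \<bar>x\<bar> * t + x\<^sup>2)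
     = 2 * (t + g * \<bar>x\<bar>) * EE g x t"
    using Bp unfolding Bt[symmetric] by (simp add: field_simps)
  ultimately show ?thesis unfolding eq by simp
qed

lemma EE0_const:
  assumes t: "t \<noteq> 0"
  shows "eventually (\<lambda>s. EE g 0 s = EE g 0 t) (nhds t)"
proof (cases "t > 0")
  case True
  show ?thesis using ev_gt[OF True] by eventually_elim (use True in \<open>simp add: EE_def fPhi_def fq_def\<close>)
next
  case False
  then have t': "t < 0" using t by simp
  show ?thesis using ev_lt[OF t'] by eventually_elim (use t' in \<open>simp add: EE_def fPhi_def fq_def\<close>)
qed

lemma D2_0nz:
  assumes t: "t \<noteq> 0"
  shows "((\<lambda>s. Ksq g 0 s) has_real_derivative 2 * (t + g * \<bar>0\<bar>) * EE g 0 t) (at t)"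
proof -
  have ev: "eventually (\<lambda>s. s\<^sup>2 * EE g 0 t = Ksq g 0 s) (nhds t)"
    using EE0_const[OF t] by eventually_elim (simp add: Ksq_eq fB_def fq_def)
  have "((\<lambda>s. s\<^sup>2 * EE g 0 t) has_real_derivative 2 * t * EE g 0 t) (at t)"
    by (auto intro!: derivative_eq_intros)
  moreover have "DERIV (\<lambda>s. s\<^sup>2 * EE g 0 t) t :> 2 * t * EE g 0 t \<longleftrightarrow> DERIV (\<lambda>s. Ksq g 0 s) t :> 2 * t * EE g 0 t"
    by (rule DERIV_cong_ev[OF refl ev refl])
  ultimately show ?thesis by simp
qed

lemma D2_00: "((\<lambda>s. Ksq g 0 s) has_real_derivative 0) (at 0)"
proof -
  define M where "M = exp (\<bar>fG g\<bar> * pi / 2)"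
  have bnd: "EE g 0 s \<le> M" for s
  proof -
    have "\<bar>fPhi g 0 s\<bar> \<le> pi/2" by (simp add: fPhi_def fq_def)
    have "fG g * fPhi g 0 s \<le> \<bar>fG g\<bar> * \<bar>fPhi g 0 s\<bar>" by (metis abs_ge_self abs_mult)
    also have "\<dots> \<le> \<bar>fG g\<bar> * (pi/2)" by (rule mult_left_mono) (use \<open>\<bar>fPhi g 0 s\<bar> \<le> pi/2\<close> in auto)
    finally have "fG g * fPhi g 0 s \<le> \<bar>fG g\<bar> * pi / 2" by simp
    then show ?thesis unfolding EE_def M_def by simp
  qed
  have "((\<lambda>s. s * EE g 0 s) \<longlongrightarrow> 0) (at 0)"
  proof (rule Lim_null_comparison)
    show "eventually (\<lambda>s. norm (s * EE g 0 s) \<le> \<bar>s\<bar> * M) (at 0)"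
      using bnd by (intro always_eventually allI) (simp add: abs_mult EE_def mult_left_mono)
    show "((\<lambda>s. \<bar>s\<bar> * M) \<longlongrightarrow> 0) (at 0)"
      by (auto intro!: tendsto_eq_intros)
  qed
  then have c: "isCont (\<lambda>s. s * EE g 0 s) 0" unfolding isCont_def by simp
  have "\<And>z. Ksq g 0 z - Ksq g 0 0 = (z * EE g 0 z) * (z - 0)"
    by (simp add: Ksq_eq fB_def fq_def power2_eq_square)
  then show ?thesis unfolding CARAT_DERIV using c by (intro exI[of _ "\<lambda>s. s * EE g 0 s"]) simp
qed

lemma D2: "((\<lambda>s. Ksq g x s) has_real_derivative 2 * (t + g * \<bar>x\<bar>) * EE g x t) (at t)"
proof (cases "x = 0")
  case False thus ?thesis by (rule D2_nz)
next
  case True thus ?thesis using D2_0nz D2_00 by (cases "t = 0") auto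
qed

lemma partial1_Ksq: "partial1 (Ksq g) = (\<lambda>u y. 2 * u * EE g u y)"
  by (intro ext) (simp add: partial1_def DERIV_imp_deriv[OF D1])

lemma partial2_Ksq: "partial2 (Ksq g) = (\<lambda>x t. 2 * (t + g * \<bar>x\<bar>) * EE g x t)"
  by (intro ext) (simp add: partial2_def DERIV_imp_deriv[OF D2])


lemma g11_eq: "finsler_g g 1 1 u y = 1/2 * deriv (\<lambda>t. 2 * t * EE g t y) u"
  by (simp add: finsler_g_def partial1_Ksq partial1_def)
lemma g12_eq: "finsler_g g 1 2 u y = 1/2 * deriv (\<lambda>t. 2 * (y + g * \<bar>t\<bar>) * EE g t y) u"
  by (simp add: finsler_g_def partial2_Ksq partial1_def)
lemma g21_eq: "finsler_g g 2 1 u y = 1/2 * deriv (\<lambda>t. 2 * u * EE g u t) y"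
  by (simp add: finsler_g_def partial1_Ksq partial2_def)
lemma g22_eq: "finsler_g g 2 2 u y = 1/2 * deriv (\<lambda>t. 2 * (t + g * \<bar>u\<bar>) * EE g u t) y"
  by (simp add: finsler_g_def partial2_Ksq partial2_def)

lemma det_nz:
  assumes u: "u \<noteq> 0"
  shows "finsler_det g u y = (EE g u y)\<^sup>2"
proof -
  define E where "E = EE g u y"
  define B where "B = fB g u y"
  have Bp: "B > 0" using B_pos[OF u] B_def by simp
  have Bd: "B = y\<^sup>2 + g * \<bar>u\<bar> * y + u\<^sup>2" by (simp add: B_def fB_def fq_def)
  have d11: "DERIV (\<lambda>t. 2 * t * EE g t y) u :> 2 * E + (- g * y * sgn u * E / B) * (2 * u)"
    unfolding E_def B_def by (rule DERIV_mult[OF _ E_du[OF u]]) (auto intro!: derivative_eq_intros)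
  have a12: "DERIV (\<lambda>t. 2 * (y + g * \<bar>t\<bar>)) u :> 2 * (0 + g * sgn u)"
    by (intro DERIV_cmult DERIV_add DERIV_const DERIV_abs_nz[OF u])
  have d12: "DERIV (\<lambda>t. 2 * (y + g * \<bar>t\<bar>) * EE g t y) u :> 2 * (0 + g * sgn u) * E + (- g * y * sgn u * E / B) * (2 * (y + g * \<bar>u\<bar>))"
    unfolding E_def B_def by (rule DERIV_mult[OF a12 E_du[OF u]])
  have d21: "DERIV (\<lambda>t. 2 * u * EE g u t) y :> 2 * u * (g * \<bar>u\<bar> * E / B)"
    unfolding E_def B_def by (rule DERIV_cmult[OF E_dy[OF u]])
  have d22: "DERIV (\<lambda>t. 2 * (t + g * \<bar>u\<bar>) * EE g u t) y :> 2 * (1 + 0) * E + (g * \<bar>u\<bar> * E / B) * (2 * (y + g * \<bar>u\<bar>))"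
    unfolding E_def B_def by (rule DERIV_mult[OF _ E_dy[OF u]]) (auto intro!: derivative_eq_intros)
  have "finsler_det g u y =
     (1/2 * (2 * E + (- g * y * sgn u * E / B) * (2 * u))) * (1/2 * (2 * (1 + 0) * E + (g * \<bar>u\<bar> * E / B) * (2 * (y + g * \<bar>u\<bar>))))
     - (1/2 * (2 * (0 + g * sgn u) * E + (- g * y * sgn u * E / B) * (2 * (y + g * \<bar>u\<bar>)))) * (1/2 * (2 * u * (g * \<bar>u\<bar> * E / B)))"
    unfolding finsler_det_def g11_eq g12_eq g21_eq g22_eq
    using DERIV_imp_deriv[OF d11] DERIV_imp_deriv[OF d12] DERIV_imp_deriv[OF d21] DERIV_imp_deriv[OF d22] by simp
  also have "\<dots> = E\<^sup>2"
  proof (cases "u > 0")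
    case True
    then have Bd': "B = y\<^sup>2 + g * u * y + u\<^sup>2" using Bd by simp
    show ?thesis using Bp True by (simp add: field_simps) (simp add: Bd' power2_eq_square algebra_simps)
  next
    case False
    then have u': "u < 0" using u by simp
    then have Bd': "B = y\<^sup>2 - g * u * y + u\<^sup>2" using Bd by simp
    show ?thesis using Bp u' by (simp add: field_simps) (simp add: Bd' power2_eq_square algebra_simps)
  qed
  finally show ?thesis by (simp add: E_def)
qed


lemma det_0:
  assumes y: "y \<noteq> 0"
  shows "finsler_det g 0 y = (EE g 0 y)\<^sup>2"
proof -
  define E where "E = EE g 0 y"
  have cH: "isCont (HH y) 0" using HH_deriv[OF y] by (rule DERIV_isCont)
  have cHa: "isCont (\<lambda>z. HH y \<bar>z\<bar>) 0"
    using cH by (intro continuous_at_compose[unfolded o_def, of _ "\<lambda>z. \<bar>z\<bar>" "HH y"]) (auto intro: continuous_intros)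
  have "isCont (\<lambda>z. EE g z y) 0"
    using cHa isCont_cong[OF Erep[OF y]] by simp
  then have c2: "isCont (\<lambda>z. 2 * EE g z y) 0" by (intro continuous_intros)
  have d11: "DERIV (\<lambda>t. 2 * t * EE g t y) 0 :> 2 * E"
    unfolding CARAT_DERIV using c2 by (intro exI[of _ "\<lambda>z. 2 * EE g z y"]) (simp add: E_def)
  have d21: "DERIV (\<lambda>t. 2 * 0 * EE g 0 t) y :> 0" by simp
  have ev: "eventually (\<lambda>t. 2 * t * E = 2 * (t + g * \<bar>0\<bar>) * EE g 0 t) (nhds y)"
    using EE0_const[OF y] by eventually_elim (simp add: E_def)
  have "DERIV (\<lambda>t. 2 * t * E) y :> 2 * E" by (auto intro!: derivative_eq_intros)
  moreover have "DERIV (\<lambda>t. 2 * t * E) y :> 2 * E \<longleftrightarrow> DERIV (\<lambda>t. 2 * (t + g * \<bar>0\<bar>) * EE g 0 t) y :> 2 * E"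
    by (rule DERIV_cong_ev[OF refl ev refl])
  ultimately have d22: "DERIV (\<lambda>t. 2 * (t + g * \<bar>0\<bar>) * EE g 0 t) y :> 2 * E" by simp
  have "finsler_det g 0 y = (1/2 * (2 * E)) * (1/2 * (2 * E)) - finsler_g g 1 2 0 y * (1/2 * 0)"
    unfolding finsler_det_def g11_eq g21_eq g22_eq
    using DERIV_imp_deriv[OF d11] DERIV_imp_deriv[OF d21] DERIV_imp_deriv[OF d22] by simp
  then show ?thesis by (simp add: E_def power2_eq_square)
qed

lemma det_all: "\<not> (u = 0 \<and> y = 0) \<Longrightarrow> finsler_det g u y = (EE g u y)\<^sup>2"
  using det_nz det_0 by (cases "u = 0") auto


end

lemma arctan_cot: "0 < f \<Longrightarrow> f < pi \<Longrightarrow> arctan (cos f / sin f) = pi/2 - f"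
  by (rule arctan_unique) (auto simp: tan_def sin_diff cos_diff)

lemma Phi_curve:
  assumes g1: "-2 < g" and g2: "g < 2" and eps: "\<epsilon> \<in> {1, -1}" and f0: "0 \<le> f" and f1: "f \<le> pi"
  shows "fPhi g (l1 g \<epsilon> f) (l2 g \<epsilon> f) = pi/2 - f"
proof -
  define h where "h = fh g"
  have h: "h > 0" using hpos[OF g1 g2] h_def by simp
  define e where "e = exp (fG g / 2 * (f - pi / 2))"
  have e: "e > 0" by (simp add: e_def)
  have ae: "\<bar>\<epsilon>\<bar> = 1" using eps by auto
  consider "f = 0" | "f = pi" | "0 < f \<and> f < pi" using f0 f1 by linarith
  then show ?thesis
  proof cases
    case 1 thus ?thesis using e by (simp add: fPhi_def fq_def l1_def l2_def e_def)
  next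
    case 2 thus ?thesis using e by (simp add: fPhi_def fq_def l1_def l2_def e_def)
  next
    case 3
    then have sp: "sin f > 0" by (simp add: sin_gt_zero)
    have q: "fq (l1 g \<epsilon> f) (l2 g \<epsilon> f) = sin f * e / h"
      using sp e h ae by (simp add: fq_def l1_def e_def h_def abs_mult)
    have A: "fA g (l1 g \<epsilon> f) (l2 g \<epsilon> f) = cos f * e"
    proof -
      have l2e: "l2 g \<epsilon> f = (cos f - g / h / 2 * sin f) * e" by (simp add: l2_def e_def fG_def h_def)
      show ?thesis unfolding fA_def q unfolding l2e using h by (simp add: field_simps)
    qed
    have "fPhi g (l1 g \<epsilon> f) (l2 g \<epsilon> f) = arctan (cos f * e / (h * (sin f * e / h)))"
      using q A sp e h by (simp add: fPhi_def h_def)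
    also have "cos f * e / (h * (sin f * e / h)) = cos f / sin f" using e h by simp
    finally show ?thesis using arctan_cot 3 by simp
  qed
qed


theorem theorem1p1:
  fixes g \<epsilon> f :: real
  assumes "-2 < g" and "g < 2"
    and "\<epsilon> \<in> {1, -1}"
    and "0 \<le> f" and "f \<le> pi"
  shows "finsleroid_K g (l1 g \<epsilon> f) (l2 g \<epsilon> f) = 1
    \<and> sqrt (finsler_det g (l1 g \<epsilon> f) (l2 g \<epsilon> f))
        * \<bar>l2 g \<epsilon> f * deriv (l1 g \<epsilon>) f - l1 g \<epsilon> f * deriv (l2 g \<epsilon>) f\<bar>
      = 1 / fh g"
proof -
  note g1 = assms(1) and g2 = assms(2) and eps = assms(3) and f0 = assms(4) and f1 = assms(5)
  define h where "h = fh g"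
  have h: "h > 0" using hpos[OF g1 g2] h_def by simp
  define G where "G = fG g"
  have GG: "G = g / h" by (simp add: G_def fG_def h_def)
  define e where "e = exp (G / 2 * (f - pi / 2))"
  have e: "e > 0" by (simp add: e_def)
  have ae: "\<bar>\<epsilon>\<bar> = 1" and ee: "\<epsilon> * \<epsilon> = 1" using eps by auto
  have sp: "sin f \<ge> 0" using f0 f1 by (simp add: sin_ge_zero)
  have l1e: "l1 g \<epsilon> f = \<epsilon> * (1 / h) * sin f * e" by (simp add: l1_def e_def G_def h_def)
  have l2e: "l2 g \<epsilon> f = (cos f - G / 2 * sin f) * e" by (simp add: l2_def e_def G_def h_def)
  have Phi: "fPhi g (l1 g \<epsilon> f) (l2 g \<epsilon> f) = pi/2 - f" by (rule Phi_curve[OF g1 g2 eps f0 f1])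
  have nz: "\<not> (l1 g \<epsilon> f = 0 \<and> l2 g \<epsilon> f = 0)"
  proof
    assume a: "l1 g \<epsilon> f = 0 \<and> l2 g \<epsilon> f = 0"
    then have "sin f = 0" using e h ae unfolding l1e by auto
    moreover then have "cos f = 0" using a e unfolding l2e by simp
    ultimately show False using sin_cos_squared_add[of f] by simp
  qed
  have B: "fB g (l1 g \<epsilon> f) (l2 g \<epsilon> f) = e\<^sup>2"
  proof -
    have al: "\<bar>l1 g \<epsilon> f\<bar> = sin f * e / h" unfolding l1e using ae sp e h by (simp add: abs_mult)
    have "fB g (l1 g \<epsilon> f) (l2 g \<epsilon> f) = (cos f * e)\<^sup>2 + (sin f * e)\<^sup>2"
      unfolding B_alt[OF g1 g2] al h_def[symmetric] unfolding l2e l1e GG using h ee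
      by (simp add: field_simps power2_eq_square)
    also have "\<dots> = e\<^sup>2 * ((cos f)\<^sup>2 + (sin f)\<^sup>2)" by (simp only: power_mult_distrib distrib_left mult.commute)
    also have "\<dots> = e\<^sup>2" by (simp only: sin_cos_squared_add2 mult_1_right)
    finally show ?thesis .
  qed
  have K: "finsleroid_K g (l1 g \<epsilon> f) (l2 g \<epsilon> f) = 1"
  proof -
    have "finsleroid_K g (l1 g \<epsilon> f) (l2 g \<epsilon> f) = e * exp (G * (pi/2 - f) / 2)"
      using nz e by (simp add: finsleroid_K_def B fJ_def Phi G_def)
    also have "\<dots> = exp (G / 2 * (f - pi / 2) + G * (pi/2 - f) / 2)" by (simp add: e_def exp_add)
    also have "\<dots> = 1" by (simp add: field_simps)
    finally show ?thesis .
  qed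
  have EEv: "EE g (l1 g \<epsilon> f) (l2 g \<epsilon> f) = exp (G * (pi/2 - f))" by (simp add: EE_def Phi G_def)
  have sd: "sqrt (finsler_det g (l1 g \<epsilon> f) (l2 g \<epsilon> f)) = exp (G * (pi/2 - f))"
    using det_all[OF g1 g2 nz] EEv by simp
  have L1: "l1 g \<epsilon> = (\<lambda>f. \<epsilon> * (1 / h) * sin f * exp (G / 2 * (f - pi / 2)))"
    by (auto simp: l1_def G_def h_def)
  have L2: "l2 g \<epsilon> = (\<lambda>f. (cos f - G / 2 * sin f) * exp (G / 2 * (f - pi / 2)))"
    by (auto simp: l2_def G_def h_def)
  have d1: "deriv (l1 g \<epsilon>) f = \<epsilon> * (1 / h) * (cos f + G / 2 * sin f) * e"
    unfolding L1 using h by (intro DERIV_imp_deriv) (auto intro!: derivative_eq_intros simp: e_def field_simps)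
  have d2: "deriv (l2 g \<epsilon>) f = - (1 + G\<^sup>2 / 4) * sin f * e"
    unfolding L2 using h by (intro DERIV_imp_deriv) (auto intro!: derivative_eq_intros simp: e_def field_simps power2_eq_square)
  have W: "l2 g \<epsilon> f * deriv (l1 g \<epsilon>) f - l1 g \<epsilon> f * deriv (l2 g \<epsilon>) f = \<epsilon> * e\<^sup>2 / h"
  proof -
    define c where "c = cos f"
    define sn where "sn = sin f"
    have cs: "c\<^sup>2 + sn\<^sup>2 = 1" by (simp add: c_def sn_def)
    have "l2 g \<epsilon> f * deriv (l1 g \<epsilon>) f - l1 g \<epsilon> f * deriv (l2 g \<epsilon>) f
       = \<epsilon> * e\<^sup>2 / h * (c\<^sup>2 + sn\<^sup>2)"
      unfolding d1 d2 l1e l2e c_def[symmetric] sn_def[symmetric] using h by (simp add: field_simps power2_eq_square)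
    then show ?thesis by (simp add: cs)
  qed
  have "exp (G * (pi/2 - f)) * e\<^sup>2 = 1"
  proof -
    have "e\<^sup>2 = exp (2 * (G / 2 * (f - pi / 2)))"
      unfolding e_def power2_eq_square by (simp only: mult_exp_exp) simp
    then have "exp (G * (pi/2 - f)) * e\<^sup>2 = exp (G * (pi/2 - f) + 2 * (G / 2 * (f - pi / 2)))"
      by (simp only: mult_exp_exp)
    also have "\<dots> = 1" by (simp add: field_simps)
    finally show ?thesis .
  qed
  then have "sqrt (finsler_det g (l1 g \<epsilon> f) (l2 g \<epsilon> f))
        * \<bar>l2 g \<epsilon> f * deriv (l1 g \<epsilon>) f - l1 g \<epsilon> f * deriv (l2 g \<epsilon>) f\<bar> = 1 / h"
    unfolding sd W using h ae by (simp add: abs_mult field_simps)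
  then show ?thesis using K h_def by simp
qed

end
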